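(* Let $p$ be a prime and let $G$ be a $1$-tuple regular finite group of exponent $p^s$ for some $s\in\mathbb{N}$. Then $\Omega_{s-i}(G)=\mho^i(G)$ for every $i\in\{0,\ldots,s\}$.
   Context: For a finite $p$-group $G$ and $i\ge 0$, $\Omega_i(G)$ is the subgroup generated by all elements of order dividing $p^i$, and $\mho^i(G)$ is the subgroup generated by all $p^i$-th powers of elements of $G$. A finite group $G$ is $1$-tuple regular if for all $g_1,h_1\in G$ of the same order there is a bijection $\Psi\colon G\to G$ such that for every $g\in G$ the assignment $g_1\mapsto h_1, g\mapsto\Psi(g)$ defines an isomorphism $\langle g_1,g\rangle\to\langle h_1,\Psi(g)\rangle$. *)

theory Defs
  imports "HOL-Algebra.Algebra"
begin

definition Omega_sub :: "('a, 'b) monoid_scheme \<Rightarrow> nat \<Rightarrow> nat \<Rightarrow> 'a set" where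
  "Omega_sub G p i = generate G {x \<in> carrier G. group.ord G x dvd p ^ i}"

definition Mho_sub :: "('a, 'b) monoid_scheme \<Rightarrow> nat \<Rightarrow> nat \<Rightarrow> 'a set" where
  "Mho_sub G p i = generate G {x [^]\<^bsub>G\<^esub> (p ^ i) | x. x \<in> carrier G}"

definition group_exponent :: "('a, 'b) monoid_scheme \<Rightarrow> nat" where
  "group_exponent G = Lcm (group.ord G ` carrier G)"

definition one_tuple_regular :: "('a, 'b) monoid_scheme \<Rightarrow> bool" where
  "one_tuple_regular G \<longleftrightarrow>
    (\<forall>g1 \<in> carrier G. \<forall>h1 \<in> carrier G. group.ord G g1 = group.ord G h1 \<longrightarrow>
      (\<exists>\<Psi>. bij_betw \<Psi> (carrier G) (carrier G) \<and>
        (\<forall>g \<in> carrier G. \<exists>\<phi>.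
           \<phi> \<in> iso (G\<lparr>carrier := generate G {g1, g}\<rparr>) (G\<lparr>carrier := generate G {h1, \<Psi> g}\<rparr>)
           \<and> \<phi> g1 = h1 \<and> \<phi> g = \<Psi> g)))"

end

theory Submission
  imports Defs "HOL-Computational_Algebra.Primes"
begin

theorem lemma4p3:
  fixes G (structure) and p s :: nat
  assumes "Factorial_Ring.prime p"
    and "group G" and "finite (carrier G)"
    and "one_tuple_regular G"
    and "group_exponent G = p ^ s"
  shows "\<forall>i \<in> {0..s}. Omega_sub G p (s - i) = Mho_sub G p i"
proof -
  interpret group G by fact
  have pp: "Factorial_Ring.prime p" using assms(1) by simp
  have p1: "p > 1" using pp prime_gt_1_nat by blast
  have orddvd: "ord x dvd p ^ s" if "x \<in> carrier G" for x
    using assms(5) that unfolding group_exponent_def by (metis dvd_Lcm imageI)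
  define OS where "OS = ord ` carrier G"
  have finO: "finite OS" using assms(3) OS_def by simp
  have neO: "OS \<noteq> {}" using OS_def by auto
  define m where "m = Max OS"
  have mO: "m \<in> OS" using finO neO m_def Max_in by blast
  have pw: "\<exists>k. x = p ^ k" if "x \<in> OS" for x
    using that orddvd OS_def divides_primepow_nat[OF pp] by blast
  obtain km where km: "m = p ^ km" using pw mO by blast
  have "x dvd m" if xO: "x \<in> OS" for x
  proof -
    obtain k where k: "x = p ^ k" using pw xO by blast
    have "x \<le> m" using xO finO m_def by simp
    then have "k \<le> km" using k km p1 power_le_imp_le_exp by blast
    then show ?thesis using k km le_imp_power_dvd by blast
  qed
  then have "Lcm OS dvd m" by (simp add: Lcm_least)
  moreover have "m dvd Lcm OS" using mO by (simp add: dvd_Lcm)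
  ultimately have "m = p ^ s" using assms(5) unfolding group_exponent_def OS_def
    using dvd_antisym by metis
  then obtain g where g: "g \<in> carrier G" "ord g = p ^ s" using mO OS_def by auto
  show ?thesis
  proof
    fix i assume "i \<in> {0..s}"
    then have i: "i \<le> s" by simp
    define A where "A = {x \<in> carrier G. ord x dvd p ^ (s - i)}"
    define B where "B = {x [^] (p ^ i) | x. x \<in> carrier G}"
    have Ac: "A \<subseteq> carrier G" using A_def by auto
    have Bc: "B \<subseteq> carrier G" using B_def by auto
    have "B \<subseteq> A"
    proof
      fix z assume "z \<in> B"
      then obtain x where x: "x \<in> carrier G" "z = x [^] (p ^ i)" using B_def by auto
      have "z [^] (p ^ (s - i)) = x [^] (p ^ i * p ^ (s - i))" using x by (simp add: nat_pow_pow)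
      also have "p ^ i * p ^ (s - i) = p ^ s" using i by (simp flip: power_add)
      finally have "z [^] (p ^ (s - i)) = \<one>" using x orddvd pow_eq_id by simp
      then show "z \<in> A" using A_def x pow_eq_id by simp
    qed
    moreover have "A \<subseteq> B"
    proof
      fix h assume "h \<in> A"
      then have h: "h \<in> carrier G" "ord h dvd p ^ (s - i)" using A_def by auto
      obtain j where j: "j \<le> s - i" "ord h = p ^ j" using h divides_primepow_nat[OF pp] by blast
      define y where "y = g [^] (p ^ (s - j - i))"
      define a where "a = y [^] (p ^ i)"
      have yc: "y \<in> carrier G" using y_def g by simp
      have ac: "a \<in> carrier G" using a_def yc by simp
      have "a = g [^] (p ^ (s - j - i) * p ^ i)" using a_def y_def g by (simp add: nat_pow_pow)
      also have "p ^ (s - j - i) * p ^ i = p ^ (s - j)" proof -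
        have "s - j - i + i = s - j" using j i by simp
        then show ?thesis by (metis power_add)
      qed
      finally have a2: "a = g [^] (p ^ (s - j))" .
      have "ord a = p ^ s div p ^ (s - j)"
        using a2 g ord_pow[of g "p ^ (s - j)"] p1 le_imp_power_dvd[of "s - j" s p] by simp
      also have "\<dots> = p ^ j" using j i p1
        by (metis diff_diff_cancel diff_le_self le_trans power_diff not_one_less_zero zero_neq_one gr_zeroI)
      finally have oa: "ord a = ord h" using j by simp
      obtain \<Psi> where Psi: "bij_betw \<Psi> (carrier G) (carrier G)"
        "\<forall>g \<in> carrier G. \<exists>\<phi>.
           \<phi> \<in> iso (G\<lparr>carrier := generate G {a, g}\<rparr>) (G\<lparr>carrier := generate G {h, \<Psi> g}\<rparr>)
           \<and> \<phi> a = h \<and> \<phi> g = \<Psi> g"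
        using assms(4) ac h oa unfolding one_tuple_regular_def by blast
      obtain \<phi> where phi: "\<phi> \<in> iso (G\<lparr>carrier := generate G {a, y}\<rparr>) (G\<lparr>carrier := generate G {h, \<Psi> y}\<rparr>)"
        "\<phi> a = h" "\<phi> y = \<Psi> y" using Psi(2) yc by blast
      have Py: "\<Psi> y \<in> carrier G" using Psi(1) yc bij_betwE by blast
      have sK: "subgroup (generate G {a, y}) G" using ac yc generate_is_subgroup by simp
      have sH: "subgroup (generate G {h, \<Psi> y}) G" using h Py generate_is_subgroup by simp
      have yK: "y \<in> generate G {a, y}" by (simp add: generate.incl)
      have hom: "\<phi> \<in> hom (G\<lparr>carrier := generate G {a, y}\<rparr>) (G\<lparr>carrier := generate G {h, \<Psi> y}\<rparr>)"
        using phi(1) unfolding iso_def by simp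
      have "\<phi> (y [^]\<^bsub>G\<lparr>carrier := generate G {a, y}\<rparr>\<^esub> (p ^ i))
            = \<phi> y [^]\<^bsub>G\<lparr>carrier := generate G {h, \<Psi> y}\<rparr>\<^esub> (p ^ i)"
        using hom_nat_pow[OF hom _ subgroup_imp_group[OF sK] subgroup_imp_group[OF sH]] yK by simp
      then have "h = \<Psi> y [^] (p ^ i)"
        using phi(2,3) a_def by (simp flip: nat_pow_consistent)
      then show "h \<in> B" using B_def Py by blast
    qed
    ultimately have AB: "A = B" by blast
    show "Omega_sub G p (s - i) = Mho_sub G p i"
      unfolding Omega_sub_def Mho_sub_def using AB A_def B_def by simp
  qed
qed

end
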